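(* Let $\Gamma$ be a labeled oriented tree of Coxeter type with at least $3$ vertices, let $\Upsilon$ be its associated Coxeter tree, and assume that all edge labels $m_e$ of $\Upsilon$ satisfy $m_e\ge 3$. Then $G(\Gamma)$ is large.
   Context: A labeled oriented tree (LOT) $\Gamma$ is a finite tree with vertex set $\mathbf{x}$ whose edges are oriented and each edge is labeled by a (possibly empty) word $w$ in $\mathbf{x}^{\pm1}$; for the edge $e=(x\xrightarrow{w}y)$ set $r_e=xw(wy)^{-1}$; $G(\Gamma)=\langle\mathbf{x}\mid r_e,\ e\text{ an edge}\rangle$. $\Gamma$ is of Coxeter type if for every edge $e=(x\xrightarrow{w}y)$ every letter $z\ne x,y$ occurs in $w$ only with even exponents. For such $\Gamma$, each $r_e$ reduces, up to cyclic permutation, in $\langle\mathbf{x}\mid x^2,x\in\mathbf{x}\rangle$ to $(yx)^{m_e}$ with $m_e\ge1$ odd; the associated Coxeter tree $\Upsilon$ is obtained from $\Gamma$ by erasing orientations and edge words and labeling each edge $e$ by $m_e$. A group is large if it has a subgroup of finite index that admits an epimorphism onto a free group of rank $\ge 2$. *)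

theory Defs
  imports "HOL-Algebra.Algebra"
begin

text \<open>A letter is a pair (generator, inverted?); (a, False) is a, (a, True) is a^-1.\<close>

type_synonym 'a word = "('a \<times> bool) list"

definition cancels :: "'a \<times> bool \<Rightarrow> 'a \<times> bool \<Rightarrow> bool" where
  "cancels p q \<longleftrightarrow> fst p = fst q \<and> snd p \<noteq> snd q"

fun fred :: "'a word \<Rightarrow> 'a word" where
  "fred [] = []"
| "fred (a # as) = (case fred as of [] \<Rightarrow> [a] | b # bs \<Rightarrow> (if cancels a b then bs else a # b # bs))"

definition inv_word :: "'a word \<Rightarrow> 'a word" where
  "inv_word w = rev (map (\<lambda>(a, b). (a, \<not> b)) w)"

definition free_group :: "'a set \<Rightarrow> 'a word monoid" where
  "free_group gens = \<lparr> carrier = {w. fred w = w \<and> fst ` set w \<subseteq> gens},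
                    monoid.mult = (\<lambda>u v. fred (u @ v)), one = [] \<rparr>"

definition relator_closure :: "'a set \<Rightarrow> 'a word set \<Rightarrow> 'a word set" where
  "relator_closure gens rels = generate (free_group gens)
     {fred (g @ r @ inv_word g) | g r. g \<in> carrier (free_group gens) \<and> r \<in> rels}"

definition presented_group :: "'a set \<Rightarrow> 'a word set \<Rightarrow> 'a word set monoid" where
  "presented_group gens rels = free_group gens Mod relator_closure gens rels"

definition large :: "('g, 'b) monoid_scheme \<Rightarrow> bool" where
  "large G \<longleftrightarrow> (\<exists>H. subgroup H G \<and> finite (rcosets\<^bsub>G\<^esub> H) \<and>
     (\<exists>S :: nat set. (\<exists>a b. a \<in> S \<and> b \<in> S \<and> a \<noteq> b) \<and>
        (\<exists>f. f \<in> hom (G\<lparr>carrier := H\<rparr>) (free_group S) \<and> f ` H = carrier (free_group S))))"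

text \<open>A LOT: finite vertex set V and a set E of oriented labeled edges (x, w, y),
  meaning x --w--> y, with w a word in V^{+-1}.\<close>

definition is_LOT :: "'a set \<Rightarrow> ('a \<times> 'a word \<times> 'a) set \<Rightarrow> bool" where
  "is_LOT V E \<longleftrightarrow> finite V \<and> V \<noteq> {} \<and> finite E \<and>
     (\<forall>(x, w, y) \<in> E. x \<in> V \<and> y \<in> V \<and> x \<noteq> y \<and> fst ` set w \<subseteq> V) \<and>
     card E = card V - 1 \<and>
     (\<forall>u \<in> V. \<forall>v \<in> V. (u, v) \<in> ({(x, y). \<exists>w. (x, w, y) \<in> E \<or> (y, w, x) \<in> E})\<^sup>*)"

definition LOT_relator :: "'a \<times> 'a word \<times> 'a \<Rightarrow> 'a word" where
  "LOT_relator e = (case e of (x, w, y) \<Rightarrow> [(x, False)] @ w @ inv_word (w @ [(y, False)]))"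

definition LOT_group :: "'a set \<Rightarrow> ('a \<times> 'a word \<times> 'a) set \<Rightarrow> 'a word set monoid" where
  "LOT_group V E = presented_group V (LOT_relator ` E)"

text \<open>Every maximal block of consecutive occurrences of the letter z in w has even length
  (i.e. z occurs only with even exponents).\<close>
definition even_exponents :: "'a \<Rightarrow> 'a word \<Rightarrow> bool" where
  "even_exponents z w \<longleftrightarrow> (\<forall>u b v. w = u @ b @ v \<and> b \<noteq> [] \<and> (\<forall>c \<in> set b. fst c = z) \<and>
       (u = [] \<or> fst (last u) \<noteq> z) \<and> (v = [] \<or> fst (hd v) \<noteq> z) \<longrightarrow> even (length b))"

definition coxeter_type :: "('a \<times> 'a word \<times> 'a) set \<Rightarrow> bool" where
  "coxeter_type E \<longleftrightarrow> (\<forall>(x, w, y) \<in> E. \<forall>z. z \<noteq> x \<and> z \<noteq> y \<longrightarrow> even_exponents z w)"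

text \<open>Reduction in the free product of copies of Z/2 (x^2 = 1): letters only, cancel equal neighbours.\<close>
fun z2red :: "'a list \<Rightarrow> 'a list" where
  "z2red [] = []"
| "z2red (a # as) = (case z2red as of [] \<Rightarrow> [a] | b # bs \<Rightarrow> (if a = b then bs else a # b # bs))"

fun cycred :: "'a list \<Rightarrow> 'a list" where
  "cycred xs = (if 2 \<le> length xs \<and> hd xs = last xs then cycred (butlast (tl xs)) else xs)"

text \<open>m is the Coxeter label of the edge (x, w, y): r_e reduces, up to cyclic permutation,
  in \<langle>V | v^2\<rangle> to (yx)^m.\<close>
definition coxeter_label :: "'a \<times> 'a word \<times> 'a \<Rightarrow> nat \<Rightarrow> bool" where
  "coxeter_label e m = (case e of (x, w, y) \<Rightarrow>
     (\<exists>k. rotate k (cycred (z2red (map fst (LOT_relator e)))) = concat (replicate m [y, x])))"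

end

theory Submission
  imports Defs
begin

lemma cancels_sym: "cancels a b \<longleftrightarrow> cancels b a"
  by (auto simp: cancels_def)

fun rd :: "'a word \<Rightarrow> bool" where
  "rd [] = True"
| "rd [a] = True"
| "rd (a # b # t) = (\<not> cancels a b \<and> rd (b # t))"

definition step :: "'a \<times> bool \<Rightarrow> 'a word \<Rightarrow> 'a word" where
  "step a l = (case l of [] \<Rightarrow> [a] | b # bs \<Rightarrow> (if cancels a b then bs else a # b # bs))"

lemma fred_Cons: "fred (a # w) = step a (fred w)"
  by (simp add: step_def)

declare fred.simps(2)[simp del]

lemma fred_single[simp]: "fred [a] = [a]"
  by (simp add: fred_Cons step_def)

lemma rd_tl: "rd (a # w) \<Longrightarrow> rd w"
  by (cases w) auto

lemma rd_step: "rd l \<Longrightarrow> rd (step a l)"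
  by (cases l rule: rd.cases) (auto simp: step_def)

lemma rd_fred: "rd (fred w)"
  by (induct w) (auto simp: fred_Cons rd_step)

lemma rd_fred_id: "rd w \<Longrightarrow> fred w = w"
proof (induct w)
  case Nil then show ?case by simp
next
  case (Cons a w)
  then have "fred w = w" using rd_tl by blast
  then show ?case using Cons.prems by (cases w) (auto simp: fred_Cons step_def)
qed

lemma fred_fred[simp]: "fred (fred w) = fred w"
  by (rule rd_fred_id[OF rd_fred])

lemma fred_eq_iff_rd: "fred w = w \<longleftrightarrow> rd w"
  by (metis rd_fred rd_fred_id)

lemma cancels_trans_eq: "cancels a b \<Longrightarrow> cancels b c \<Longrightarrow> a = c"
  by (cases a; cases b; cases c) (auto simp: cancels_def)

lemma step_step_cancel: assumes r: "rd l" and ab: "cancels a b" shows "step a (step b l) = l"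
proof (cases l rule: rd.cases)
  case 1 then show ?thesis using ab by (simp add: step_def)
next
  case (2 c)
  then show ?thesis using ab by (auto simp: step_def dest: cancels_trans_eq)
next
  case (3 c d t)
  show ?thesis
  proof (cases "cancels b c")
    case True
    then have "a = c" using ab cancels_trans_eq by blast
    then show ?thesis using 3 r True by (auto simp: step_def)
  next
    case False
    then show ?thesis using 3 ab by (auto simp: step_def)
  qed
qed

lemma fred_append_fred2: "fred (u @ fred v) = fred (u @ v)"
  by (induct u) (auto simp: fred_Cons)

lemma fred_step_append: "rd r \<Longrightarrow> fred (step a r @ v) = step a (fred (r @ v))"
proof (cases r)
  case Nil then show ?thesis by (simp add: step_def fred_Cons)
next
  case (Cons b bs)
  assume "rd r"
  show ?thesis
  proof (cases "cancels a b")
    case True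
    have "step a (fred (r @ v)) = step a (step b (fred (bs @ v)))" using Cons by (simp add: fred_Cons)
    also have "\<dots> = fred (bs @ v)" by (rule step_step_cancel[OF rd_fred True])
    finally show ?thesis using Cons True by (simp add: step_def)
  next
    case False
    then show ?thesis using Cons by (simp add: step_def fred_Cons)
  qed
qed

lemma fred_append_fred1: "fred (fred u @ v) = fred (u @ v)"
proof (induct u)
  case Nil then show ?case by simp
next
  case (Cons a u)
  have "fred (fred (a # u) @ v) = fred (step a (fred u) @ v)" by (simp add: fred_Cons)
  also have "\<dots> = step a (fred (fred u @ v))" by (rule fred_step_append[OF rd_fred])
  also have "\<dots> = fred ((a # u) @ v)" using Cons by (simp add: fred_Cons)
  finally show ?case .
qed

lemma fred_mid: "fred (u @ fred v @ w) = fred (u @ v @ w)"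
  by (metis fred_append_fred1 fred_append_fred2)

lemma set_step: "set (step a l) \<subseteq> insert a (set l)"
  by (auto simp: step_def split: list.splits)

lemma set_fred: "set (fred w) \<subseteq> set w"
proof (induct w)
  case Nil then show ?case by simp
next
  case (Cons a w) then show ?case using set_step[of a "fred w"] by (auto simp: fred_Cons)
qed

lemma inv_word_Nil[simp]: "inv_word [] = []"
  by (simp add: inv_word_def)

lemma inv_word_Cons: "inv_word (a # w) = inv_word w @ [(fst a, \<not> snd a)]"
  by (cases a) (simp add: inv_word_def)

lemma inv_word_append: "inv_word (u @ v) = inv_word v @ inv_word u"
  by (simp add: inv_word_def)

lemma inv_word_inv_word[simp]: "inv_word (inv_word w) = w"
  by (induct w) (auto simp: inv_word_def)

lemma fst_set_inv_word[simp]: "fst ` set (inv_word w) = fst ` set w"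
proof -
  have "fst \<circ> (\<lambda>(a, b). (a, \<not> b)) = (fst :: 'a \<times> bool \<Rightarrow> 'a)" by auto
  then show ?thesis by (simp add: inv_word_def image_comp)
qed

lemma fred_inv_word_left: "fred (inv_word w @ w) = []"
proof (induct w)
  case Nil then show ?case by simp
next
  case (Cons a w)
  have c: "cancels (fst a, \<not> snd a) a" by (simp add: cancels_def)
  have "fred (inv_word (a # w) @ a # w) = fred (inv_word w @ fred ([(fst a, \<not> snd a)] @ a # w))"
    by (simp add: inv_word_Cons fred_append_fred2)
  also have "fred ([(fst a, \<not> snd a)] @ a # w) = fred w"
    using step_step_cancel[OF rd_fred c] by (simp add: fred_Cons)
  finally show ?case using Cons by (simp add: fred_append_fred2)
qed

lemma fred_inv_word_right: "fred (w @ inv_word w) = []"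
  using fred_inv_word_left[of "inv_word w"] by simp

lemma fg_carrier: "w \<in> carrier (free_group S) \<longleftrightarrow> fred w = w \<and> fst ` set w \<subseteq> S"
  by (simp add: free_group_def)

lemma fg_mult: "x \<otimes>\<^bsub>free_group S\<^esub> y = fred (x @ y)"
  by (simp add: free_group_def)

lemma fg_one: "\<one>\<^bsub>free_group S\<^esub> = []"
  by (simp add: free_group_def)

lemma fred_in_carrier: "fst ` set w \<subseteq> S \<Longrightarrow> fred w \<in> carrier (free_group S)"
  using set_fred[of w] by (auto simp: fg_carrier)

lemma fg_group: "group (free_group S)"
proof (rule groupI)
  fix x y assume "x \<in> carrier (free_group S)" "y \<in> carrier (free_group S)"
  then show "x \<otimes>\<^bsub>free_group S\<^esub> y \<in> carrier (free_group S)"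
    unfolding fg_mult by (intro fred_in_carrier) (auto simp: fg_carrier)
next
  show "\<one>\<^bsub>free_group S\<^esub> \<in> carrier (free_group S)" by (simp add: fg_one fg_carrier)
next
  fix x y z
  show "x \<otimes>\<^bsub>free_group S\<^esub> y \<otimes>\<^bsub>free_group S\<^esub> z = x \<otimes>\<^bsub>free_group S\<^esub> (y \<otimes>\<^bsub>free_group S\<^esub> z)"
    by (simp add: fg_mult fred_append_fred1 fred_append_fred2)
next
  fix x assume "x \<in> carrier (free_group S)"
  then show "\<one>\<^bsub>free_group S\<^esub> \<otimes>\<^bsub>free_group S\<^esub> x = x" by (simp add: fg_mult fg_one fg_carrier)
next
  fix x assume x: "x \<in> carrier (free_group S)"
  show "\<exists>y\<in>carrier (free_group S). y \<otimes>\<^bsub>free_group S\<^esub> x = \<one>\<^bsub>free_group S\<^esub>"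
  proof (intro bexI)
    show "fred (inv_word x) \<in> carrier (free_group S)"
      using x by (intro fred_in_carrier) (auto simp: fg_carrier)
    show "fred (inv_word x) \<otimes>\<^bsub>free_group S\<^esub> x = \<one>\<^bsub>free_group S\<^esub>"
      by (simp add: fg_mult fg_one fred_append_fred1 fred_inv_word_left)
  qed
qed

lemma fg_inv: assumes "x \<in> carrier (free_group S)"
  shows "inv\<^bsub>free_group S\<^esub> x = fred (inv_word x)"
proof -
  interpret group "free_group S" by (rule fg_group)
  have c: "fred (inv_word x) \<in> carrier (free_group S)"
    using assms by (intro fred_in_carrier) (auto simp: fg_carrier)
  show ?thesis
    by (rule inv_equality[OF _ assms c]) (simp add: fg_mult fg_one fred_append_fred1 fred_inv_word_left)
qed

lemma fred_inv_word_fred: "fred (inv_word (fred x)) = fred (inv_word x)"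
proof -
  interpret group "free_group (fst ` set x)" by (rule fg_group)
  have fx: "fred x \<in> carrier (free_group (fst ` set x))"
    by (rule fred_in_carrier) simp
  have a: "fred (inv_word (fred x)) \<in> carrier (free_group (fst ` set x))"
    using set_fred[of x] by (intro fred_in_carrier) auto
  have b: "fred (inv_word x) \<in> carrier (free_group (fst ` set x))"
    by (intro fred_in_carrier) auto
  have "fred (inv_word (fred x)) = inv\<^bsub>free_group (fst ` set x)\<^esub> (fred x)"
    by (rule inv_equality[OF _ fx a, symmetric]) (simp add: fg_mult fg_one fred_append_fred1 fred_inv_word_left)
  moreover have "fred (inv_word x) = inv\<^bsub>free_group (fst ` set x)\<^esub> (fred x)"
    by (rule inv_equality[OF _ fx b, symmetric])
       (simp add: fg_mult fg_one fred_append_fred1 fred_append_fred2 fred_inv_word_left)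
  ultimately show ?thesis by simp
qed

lemma fg_generated:
  assumes sg: "subgroup T (free_group S)" and gens: "\<And>s. s \<in> S \<Longrightarrow> [(s, False)] \<in> T"
  shows "carrier (free_group S) \<subseteq> T"
proof
  interpret group "free_group S" by (rule fg_group)
  fix w assume "w \<in> carrier (free_group S)"
  then have "rd w" "fst ` set w \<subseteq> S" by (auto simp: fg_carrier fred_eq_iff_rd)
  then show "w \<in> T"
  proof (induct w)
    case Nil then show ?case using subgroup.one_closed[OF sg] by (simp add: fg_one)
  next
    case (Cons a w)
    obtain s b where a: "a = (s, b)" by (cases a)
    have s: "s \<in> S" using Cons.prems a by auto
    have wT: "w \<in> T" using Cons.hyps Cons.prems rd_tl[of a w] by auto
    have aT: "[a] \<in> T"
    proof (cases b)
      case False then show ?thesis using gens[OF s] a by simp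
    next
      case True
      have "[(s, False)] \<in> carrier (free_group S)" using s by (simp add: fg_carrier)
      then have "inv\<^bsub>free_group S\<^esub> [(s, False)] = [(s, True)]"
        by (simp add: fg_inv inv_word_def fred_Cons step_def)
      then show ?thesis using subgroup.m_inv_closed[OF sg gens[OF s]] a True by simp
    qed
    have "[a] \<otimes>\<^bsub>free_group S\<^esub> w = a # w"
      using Cons.prems(1) rd_fred_id[OF Cons.prems(1)] by (simp add: fg_mult)
    then show ?case using subgroup.m_closed[OF sg aT wT] by simp
  qed
qed


fun ev :: "('g, 'b) monoid_scheme \<Rightarrow> ('a \<Rightarrow> 'g) \<Rightarrow> 'a word \<Rightarrow> 'g" where
  "ev K s [] = \<one>\<^bsub>K\<^esub>"
| "ev K s (a # w) = (if snd a then inv\<^bsub>K\<^esub> (s (fst a)) else s (fst a)) \<otimes>\<^bsub>K\<^esub> ev K s w"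

context group
begin

lemma ev_closed: "(\<And>v. s v \<in> carrier G) \<Longrightarrow> ev G s w \<in> carrier G"
  by (induct w) auto

lemma ev_append: "(\<And>v. s v \<in> carrier G) \<Longrightarrow> ev G s (u @ w) = ev G s u \<otimes> ev G s w"
  by (induct u) (auto simp: ev_closed m_assoc)

lemma ev_step: assumes s: "\<And>v. s v \<in> carrier G" shows "ev G s (step a l) = ev G s (a # l)"
proof (cases l)
  case Nil then show ?thesis by (simp add: step_def)
next
  case (Cons c cs)
  show ?thesis
  proof (cases "cancels a c")
    case True
    then obtain v b where a: "a = (v, b)" and c: "c = (v, \<not> b)" by (cases a; cases c) (auto simp: cancels_def)
    have "ev G s (a # l) = ((if b then inv s v else s v) \<otimes> (if b then s v else inv s v)) \<otimes> ev G s cs"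
      using Cons a c s by (simp add: m_assoc ev_closed)
    also have "\<dots> = ev G s cs" using s by (cases b) (auto simp: ev_closed)
    finally show ?thesis using Cons True by (simp add: step_def)
  next
    case False then show ?thesis using Cons by (simp add: step_def)
  qed
qed

lemma ev_fred: "(\<And>v. s v \<in> carrier G) \<Longrightarrow> ev G s (fred w) = ev G s w"
  by (induct w) (auto simp: fred_Cons ev_step)

lemma ev_inv_word: assumes s: "\<And>v. s v \<in> carrier G" shows "ev G s (inv_word w) = inv (ev G s w)"
proof (induct w)
  case Nil then show ?case by simp
next
  case (Cons a w)
  have "ev G s (inv_word (a # w)) = inv (ev G s w) \<otimes> (if snd a then s (fst a) else inv (s (fst a)))"
    using Cons s by (simp add: inv_word_Cons ev_append ev_closed)
  also have "\<dots> = inv ((if snd a then inv (s (fst a)) else s (fst a)) \<otimes> ev G s w)"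
    using s by (simp add: inv_mult_group ev_closed)
  finally show ?case by simp
qed

end

lemma conj_in_carrier:
  "g \<in> carrier (free_group gens) \<Longrightarrow> fst ` set r \<subseteq> gens \<Longrightarrow>
   fred (g @ r @ inv_word g) \<in> carrier (free_group gens)"
  by (rule fred_in_carrier) (auto simp: fg_carrier image_Un)

definition gen_set :: "'a set \<Rightarrow> 'a word set \<Rightarrow> 'a word set" where
  "gen_set gens rels = {fred (g @ r @ inv_word g) | g r. g \<in> carrier (free_group gens) \<and> r \<in> rels}"

lemma relator_closure_normal:
  assumes rels: "\<And>r. r \<in> rels \<Longrightarrow> fst ` set r \<subseteq> gens"
  shows "relator_closure gens rels \<lhd> free_group gens"
proof -
  interpret F: group "free_group gens" by (rule fg_group)
  have sub: "gen_set gens rels \<subseteq> carrier (free_group gens)"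
    using rels by (auto simp: gen_set_def intro!: conj_in_carrier)
  show ?thesis unfolding relator_closure_def gen_set_def[symmetric]
  proof (rule F.normal_generateI[OF sub])
    fix h g assume h: "h \<in> gen_set gens rels" and g: "g \<in> carrier (free_group gens)"
    then obtain g' r where h': "h = fred (g' @ r @ inv_word g')" and g': "g' \<in> carrier (free_group gens)"
      and r: "r \<in> rels" by (auto simp: gen_set_def)
    define g'' where "g'' = fred (g @ g')"
    have g'': "g'' \<in> carrier (free_group gens)" using g g' by (simp add: g''_def F.m_closed[unfolded fg_mult])
    have "g \<otimes>\<^bsub>free_group gens\<^esub> h \<otimes>\<^bsub>free_group gens\<^esub> inv\<^bsub>free_group gens\<^esub> g
        = fred (fred (g @ h) @ fred (inv_word g))"
      using g by (simp add: fg_mult fg_inv)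
    also have "\<dots> = fred (g @ g' @ r @ inv_word g' @ inv_word g)"
      by (simp add: h' fred_append_fred1 fred_append_fred2 fred_mid)
    also have "\<dots> = fred (g'' @ r @ inv_word g'')"
    proof -
      have "fred (g'' @ r @ inv_word g'') = fred (g'' @ fred (r @ fred (inv_word g'')))"
        by (simp add: fred_append_fred2)
      also have "fred (inv_word g'') = fred (inv_word (g @ g'))"
        by (simp add: g''_def fred_inv_word_fred)
      finally show ?thesis
        by (simp add: g''_def fred_append_fred1 fred_append_fred2 inv_word_append)
    qed
    finally show "g \<otimes>\<^bsub>free_group gens\<^esub> h \<otimes>\<^bsub>free_group gens\<^esub> inv\<^bsub>free_group gens\<^esub> g \<in> gen_set gens rels"
      using g'' r by (auto simp: gen_set_def)
  qed
qed

lemma presented_group_is_group: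
  assumes rels: "\<And>r. r \<in> rels \<Longrightarrow> fst ` set r \<subseteq> gens"
  shows "group (presented_group gens rels)"
  unfolding presented_group_def
  by (rule normal.factorgroup_is_group[OF relator_closure_normal[OF rels]])

lemma relator_closure_ker:
  assumes K: "group K" and s: "\<And>v. s v \<in> carrier K"
    and rels: "\<And>r. r \<in> rels \<Longrightarrow> fst ` set r \<subseteq> gens \<and> ev K s r = \<one>\<^bsub>K\<^esub>"
  shows "n \<in> relator_closure gens rels \<Longrightarrow> ev K s n = \<one>\<^bsub>K\<^esub>"
  unfolding relator_closure_def
proof (induct rule: generate.induct)
  interpret K: group K by (rule K)
  case one then show ?case by (simp add: fg_one)
next
  interpret K: group K by (rule K)
  case (incl h)
  then obtain g r where h: "h = fred (g @ r @ inv_word g)" and r: "r \<in> rels" by auto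
  show ?case using rels[OF r] s
    by (simp add: h K.ev_fred K.ev_append K.ev_inv_word K.ev_closed)
next
  interpret K: group K by (rule K)
  case (inv h)
  then obtain g r where h: "h = fred (g @ r @ inv_word g)" and r: "r \<in> rels"
    and g: "g \<in> carrier (free_group gens)" by auto
  have hc: "h \<in> carrier (free_group gens)"
    using g rels[OF r] conj_in_carrier unfolding h by blast
  have e: "ev K s h = \<one>\<^bsub>K\<^esub>" using rels[OF r] s
    by (simp add: h K.ev_fred K.ev_append K.ev_inv_word K.ev_closed)
  show ?case using e s hc by (simp add: fg_inv K.ev_fred K.ev_inv_word)
next
  interpret K: group K by (rule K)
  case (eng h1 h2)
  then show ?case using s by (simp add: fg_mult K.ev_fred K.ev_append)
qed

definition indhom :: "('g, 'b) monoid_scheme \<Rightarrow> ('a \<Rightarrow> 'g) \<Rightarrow> 'a word set \<Rightarrow> 'g" where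
  "indhom K s Y = the_elem (ev K s ` Y)"

lemma presented_indhom:
  assumes K: "group K" and s: "\<And>v. s v \<in> carrier K"
    and rels: "\<And>r. r \<in> rels \<Longrightarrow> fst ` set r \<subseteq> gens \<and> ev K s r = \<one>\<^bsub>K\<^esub>"
  shows "indhom K s \<in> hom (presented_group gens rels) K"
    and "\<And>w. w \<in> carrier (free_group gens) \<Longrightarrow>
          relator_closure gens rels #>\<^bsub>free_group gens\<^esub> w \<in> carrier (presented_group gens rels)
        \<and> indhom K s (relator_closure gens rels #>\<^bsub>free_group gens\<^esub> w) = ev K s w"
    and "carrier (presented_group gens rels) = (\<lambda>w. relator_closure gens rels #>\<^bsub>free_group gens\<^esub> w) ` carrier (free_group gens)"
proof -
  interpret K: group K by (rule K)
  interpret F: group "free_group gens" by (rule fg_group)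
  let ?N = "relator_closure gens rels"
  have nrm: "?N \<lhd> free_group gens" using rels by (intro relator_closure_normal) auto
  interpret N: normal ?N "free_group gens" by (rule nrm)
  have ker: "\<And>n. n \<in> ?N \<Longrightarrow> ev K s n = \<one>\<^bsub>K\<^esub>"
    by (rule relator_closure_ker[OF K s rels])
  have img: "\<And>w. w \<in> carrier (free_group gens) \<Longrightarrow> indhom K s (?N #>\<^bsub>free_group gens\<^esub> w) = ev K s w"
  proof -
    fix w assume w: "w \<in> carrier (free_group gens)"
    have "ev K s ` (?N #>\<^bsub>free_group gens\<^esub> w) = {ev K s w}"
    proof -
      have "ev K s ` (?N #>\<^bsub>free_group gens\<^esub> w) = (\<lambda>n. ev K s (fred (n @ w))) ` ?N"
        by (auto simp: r_coset_def fg_mult)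
      also have "\<dots> = (\<lambda>n. ev K s w) ` ?N"
        using ker s by (intro image_cong) (auto simp: K.ev_fred K.ev_append K.ev_closed)
      also have "\<dots> = {ev K s w}"
      proof -
        have "[] \<in> ?N" using N.one_closed by (simp add: fg_one)
        then show ?thesis by blast
      qed
      finally show ?thesis .
    qed
    then show "indhom K s (?N #>\<^bsub>free_group gens\<^esub> w) = ev K s w" by (simp add: indhom_def)
  qed
  have car: "carrier (presented_group gens rels) = (\<lambda>w. ?N #>\<^bsub>free_group gens\<^esub> w) ` carrier (free_group gens)"
    by (auto simp: presented_group_def FactGroup_def RCOSETS_def)
  show "carrier (presented_group gens rels) = (\<lambda>w. ?N #>\<^bsub>free_group gens\<^esub> w) ` carrier (free_group gens)"
    by (rule car)
  show "\<And>w. w \<in> carrier (free_group gens) \<Longrightarrow>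
          ?N #>\<^bsub>free_group gens\<^esub> w \<in> carrier (presented_group gens rels)
        \<and> indhom K s (?N #>\<^bsub>free_group gens\<^esub> w) = ev K s w"
    using img car by auto
  show "indhom K s \<in> hom (presented_group gens rels) K"
  proof (rule homI)
    fix CA assume "CA \<in> carrier (presented_group gens rels)"
    then obtain x where "x \<in> carrier (free_group gens)" "CA = ?N #>\<^bsub>free_group gens\<^esub> x" using car by auto
    then show "indhom K s CA \<in> carrier K" using img s by (simp add: K.ev_closed)
  next
    fix CA CB assume "CA \<in> carrier (presented_group gens rels)" "CB \<in> carrier (presented_group gens rels)"
    then obtain x y where x: "x \<in> carrier (free_group gens)" "CA = ?N #>\<^bsub>free_group gens\<^esub> x"
      and y: "y \<in> carrier (free_group gens)" "CB = ?N #>\<^bsub>free_group gens\<^esub> y" using car by auto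
    have "CA \<otimes>\<^bsub>presented_group gens rels\<^esub> CB = ?N #>\<^bsub>free_group gens\<^esub> (x \<otimes>\<^bsub>free_group gens\<^esub> y)"
      using x y by (simp add: presented_group_def FactGroup_def N.rcos_sum)
    then show "indhom K s (CA \<otimes>\<^bsub>presented_group gens rels\<^esub> CB) = indhom K s CA \<otimes>\<^bsub>K\<^esub> indhom K s CB"
      using x y img[OF F.m_closed[OF x(1) y(1)]] img[OF x(1)] img[OF y(1)] s by (simp add: fg_mult K.ev_fred K.ev_append)
  qed
qed


declare cycred.simps[simp del]

fun evl :: "('g, 'b) monoid_scheme \<Rightarrow> ('a \<Rightarrow> 'g) \<Rightarrow> 'a list \<Rightarrow> 'g" where
  "evl K s [] = \<one>\<^bsub>K\<^esub>"
| "evl K s (v # l) = s v \<otimes>\<^bsub>K\<^esub> evl K s l"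

context group
begin

lemma evl_closed: "(\<And>v. s v \<in> carrier G) \<Longrightarrow> evl G s l \<in> carrier G"
  by (induct l) auto

lemma evl_append: "(\<And>v. s v \<in> carrier G) \<Longrightarrow> evl G s (u @ l) = evl G s u \<otimes> evl G s l"
  by (induct u) (auto simp: evl_closed m_assoc)

lemma ev_evl:
  assumes s: "\<And>v. s v \<in> carrier G" and inv: "\<And>v. s v \<otimes> s v = \<one>"
  shows "ev G s w = evl G s (map fst w)"
proof (induct w)
  case Nil then show ?case by simp
next
  case (Cons a w)
  have "inv (s (fst a)) = s (fst a)" using inv s by (intro inv_equality) auto
  then show ?case using Cons by simp
qed

lemma evl_z2red:
  assumes s: "\<And>v. s v \<in> carrier G" and inv: "\<And>v. s v \<otimes> s v = \<one>"
  shows "evl G s (z2red l) = evl G s l"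
proof (induct l)
  case Nil then show ?case by simp
next
  case (Cons a l)
  show ?case
  proof (cases "z2red l")
    case Nil then show ?thesis using Cons by simp
  next
    case (Cons b bs)
    show ?thesis
    proof (cases "a = b")
      case True
      have "evl G s (a # l) = (s a \<otimes> s a) \<otimes> evl G s bs"
        using Cons \<open>evl G s (z2red l) = evl G s l\<close> True s by (simp add: m_assoc evl_closed)
      then show ?thesis using Cons True inv s by (simp add: evl_closed)
    next
      case False then show ?thesis using Cons \<open>evl G s (z2red l) = evl G s l\<close> by simp
    qed
  qed
qed

lemma list_hd_mid_last: "2 \<le> length l \<Longrightarrow> l = hd l # butlast (tl l) @ [last l]"
  by (cases l) (auto simp: last_ConsR)

lemma evl_cycred:
  assumes s: "\<And>v. s v \<in> carrier G" and inv: "\<And>v. s v \<otimes> s v = \<one>"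
  shows "evl G s (cycred l) = \<one> \<Longrightarrow> evl G s l = \<one>"
proof (induct l rule: cycred.induct)
  case (1 xs)
  show ?case
  proof (cases "2 \<le> length xs \<and> hd xs = last xs")
    case True
    then have c: "cycred xs = cycred (butlast (tl xs))" by (subst cycred.simps) simp
    have m: "evl G s (butlast (tl xs)) = \<one>" using 1 True c by simp
    have "evl G s xs = evl G s (hd xs # butlast (tl xs) @ [last xs])"
      using list_hd_mid_last True by metis
    also have "\<dots> = s (hd xs) \<otimes> s (hd xs)" using m s True by (simp add: evl_append)
    finally show ?thesis using inv by simp
  next
    case False
    then have "cycred xs = xs" by (subst cycred.simps) auto
    then show ?thesis using 1 by simp
  qed
qed

lemma evl_rotate:
  assumes s: "\<And>v. s v \<in> carrier G"
  shows "evl G s (rotate k l) = \<one> \<Longrightarrow> evl G s l = \<one>"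
proof -
  assume h: "evl G s (rotate k l) = \<one>"
  let ?n = "k mod length l"
  have "evl G s (drop ?n l) \<otimes> evl G s (take ?n l) = \<one>"
    using h s by (simp add: rotate_drop_take evl_append)
  then have "evl G s (take ?n l) \<otimes> evl G s (drop ?n l) = \<one>"
    by (rule inv_comm[OF _ evl_closed[of s, OF s] evl_closed[of s, OF s]])
  moreover have "evl G s (take ?n l @ drop ?n l) = evl G s (take ?n l) \<otimes> evl G s (drop ?n l)"
    by (rule evl_append[of s, OF s])
  ultimately show ?thesis by simp
qed

lemma evl_rep:
  assumes s: "\<And>v. s v \<in> carrier G"
  shows "evl G s (concat (replicate m [y, x])) = (s y \<otimes> s x) [^] m"
proof (induct m)
  case 0 then show ?case by simp
next
  case (Suc m)
  have "evl G s (concat (replicate (Suc m) [y, x])) = (s y \<otimes> s x) \<otimes> (s y \<otimes> s x) [^] m"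
    using Suc s by (simp add: m_assoc evl_closed)
  also have "\<dots> = (s y \<otimes> s x) [^] Suc m" using s by (metis nat_pow_Suc2 m_closed)
  finally show ?case .
qed

lemma relator_trivial:
  assumes s: "\<And>v. s v \<in> carrier G" and inv: "\<And>v. s v \<otimes> s v = \<one>"
    and lab: "coxeter_label (x, w, y) m" and pw: "(s y \<otimes> s x) [^] m = \<one>"
  shows "ev G s (LOT_relator (x, w, y)) = \<one>"
proof -
  obtain k where k: "rotate k (cycred (z2red (map fst (LOT_relator (x, w, y))))) = concat (replicate m [y, x])"
    using lab by (auto simp: coxeter_label_def)
  have "evl G s (rotate k (cycred (z2red (map fst (LOT_relator (x, w, y)))))) = \<one>"
    using k pw s by (simp add: evl_rep)
  then have "evl G s (cycred (z2red (map fst (LOT_relator (x, w, y))))) = \<one>"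
    by (rule evl_rotate[OF s])
  then have "evl G s (z2red (map fst (LOT_relator (x, w, y)))) = \<one>"
    by (rule evl_cycred[OF s inv])
  moreover have "evl G s (z2red (map fst (LOT_relator (x, w, y)))) = evl G s (map fst (LOT_relator (x, w, y)))"
    by (rule evl_z2red[OF s inv])
  ultimately have "evl G s (map fst (LOT_relator (x, w, y))) = \<one>" by simp
  moreover have "ev G s (LOT_relator (x, w, y)) = evl G s (map fst (LOT_relator (x, w, y)))"
    by (rule ev_evl[OF s inv])
  ultimately show ?thesis by simp
qed

end


abbreviation F2 :: "nat word monoid" where "F2 \<equiv> free_group {0, 1}"

definition wr :: "'p set \<Rightarrow> (('p \<Rightarrow> nat word) \<times> ('p \<Rightarrow> 'p)) monoid" where
  "wr Om = \<lparr>carrier = {k. bij (snd k) \<and> snd k ` Om = Om \<and> (\<forall>x. fst k x \<in> carrier F2)},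
     monoid.mult = (\<lambda>k l. (\<lambda>x. fred (fst k x @ fst l (snd k x)), snd l \<circ> snd k)),
     one = (\<lambda>x. [], id)\<rparr>"

lemma wr_carrier: "k \<in> carrier (wr Om) \<longleftrightarrow> bij (snd k) \<and> snd k ` Om = Om \<and> (\<forall>x. fst k x \<in> carrier F2)"
  by (simp add: wr_def)

lemma wr_mult_fst: "fst (k \<otimes>\<^bsub>wr Om\<^esub> l) x = fred (fst k x @ fst l (snd k x))"
  by (simp add: wr_def)

lemma wr_mult_snd: "snd (k \<otimes>\<^bsub>wr Om\<^esub> l) = snd l \<circ> snd k"
  by (simp add: wr_def)

lemma wr_one: "\<one>\<^bsub>wr Om\<^esub> = (\<lambda>x. [], id)"
  by (simp add: wr_def)

lemma wr_mult: "k \<otimes>\<^bsub>wr Om\<^esub> l = (\<lambda>x. fred (fst k x @ fst l (snd k x)), snd l \<circ> snd k)"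
  by (simp add: wr_def)

lemma F2_red: "w \<in> carrier F2 \<Longrightarrow> fred w = w"
  by (simp add: fg_carrier)

lemma wr_group: "group (wr Om)"
proof (rule groupI)
  fix k l assume k: "k \<in> carrier (wr Om)" and l: "l \<in> carrier (wr Om)"
  show "k \<otimes>\<^bsub>wr Om\<^esub> l \<in> carrier (wr Om)"
    unfolding wr_carrier wr_mult_snd
  proof (intro conjI allI)
    show "bij (snd l \<circ> snd k)" using k l by (auto simp: wr_carrier intro: bij_comp)
    have "(snd l \<circ> snd k) ` Om = snd l ` (snd k ` Om)" by (simp add: image_comp)
    then show "(snd l \<circ> snd k) ` Om = Om" using k l by (simp add: wr_carrier)
    fix x
    have kx: "fst k x \<in> carrier F2" using k by (simp add: wr_carrier)
    have lx: "fst l (snd k x) \<in> carrier F2" using l by (simp add: wr_carrier)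
    show "fst (k \<otimes>\<^bsub>wr Om\<^esub> l) x \<in> carrier F2"
      unfolding wr_mult_fst by (rule fred_in_carrier) (use kx lx in \<open>simp add: fg_carrier image_Un\<close>)
  qed
next
  show "\<one>\<^bsub>wr Om\<^esub> \<in> carrier (wr Om)" by (simp add: wr_one wr_carrier fg_carrier)
next
  fix k l m
  show "k \<otimes>\<^bsub>wr Om\<^esub> l \<otimes>\<^bsub>wr Om\<^esub> m = k \<otimes>\<^bsub>wr Om\<^esub> (l \<otimes>\<^bsub>wr Om\<^esub> m)"
    by (simp add: wr_mult fred_append_fred1 fred_append_fred2 comp_assoc)
next
  fix k assume k: "k \<in> carrier (wr Om)"
  then show "\<one>\<^bsub>wr Om\<^esub> \<otimes>\<^bsub>wr Om\<^esub> k = k"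
    by (simp add: wr_mult wr_one wr_carrier F2_red)
next
  fix k assume k: "k \<in> carrier (wr Om)"
  have bij: "bij (snd k)" and im: "snd k ` Om = Om" and f: "\<And>x. fst k x \<in> carrier F2"
    using k by (auto simp: wr_carrier)
  define yk where "yk = (\<lambda>x. fred (inv_word (fst k (Hilbert_Choice.inv (snd k) x))), Hilbert_Choice.inv (snd k))"
  show "\<exists>yk\<in>carrier (wr Om). yk \<otimes>\<^bsub>wr Om\<^esub> k = \<one>\<^bsub>wr Om\<^esub>"
  proof (intro bexI)
    show "yk \<in> carrier (wr Om)"
      unfolding wr_carrier yk_def
    proof (intro conjI allI)
      show "bij (snd (\<lambda>x. fred (inv_word (fst k (Hilbert_Choice.inv (snd k) x))), Hilbert_Choice.inv (snd k)))"
        using bij by (simp add: bij_imp_bij_inv)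
      show "snd (\<lambda>x. fred (inv_word (fst k (Hilbert_Choice.inv (snd k) x))), Hilbert_Choice.inv (snd k)) ` Om = Om"
        using bij im by (metis bij_is_inj image_inv_f_f snd_conv)
      fix x
      show "fst (\<lambda>x. fred (inv_word (fst k (Hilbert_Choice.inv (snd k) x))), Hilbert_Choice.inv (snd k)) x \<in> carrier F2"
        unfolding fst_conv by (rule fred_in_carrier) (use f[of "Hilbert_Choice.inv (snd k) x"] in \<open>simp add: fg_carrier\<close>)
    qed
    show "yk \<otimes>\<^bsub>wr Om\<^esub> k = \<one>\<^bsub>wr Om\<^esub>"
      using bij by (simp add: yk_def wr_mult wr_one fred_append_fred1 fred_inv_word_left
          bij_is_surj surj_iff[symmetric])
  qed
qed

definition Pm :: "('p \<Rightarrow> 'p) \<Rightarrow> ('p \<Rightarrow> nat word) \<times> ('p \<Rightarrow> 'p)" where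
  "Pm f = (\<lambda>x. [], f)"

definition Gm :: "('p \<Rightarrow> nat word) \<Rightarrow> ('p \<Rightarrow> nat word) \<times> ('p \<Rightarrow> 'p)" where
  "Gm g = (g, id)"

lemma Pm_carrier: "bij f \<Longrightarrow> f ` Om = Om \<Longrightarrow> Pm f \<in> carrier (wr Om)"
  by (simp add: Pm_def wr_carrier fg_carrier)

lemma Pm_mult: "Pm f \<otimes>\<^bsub>wr Om\<^esub> Pm g = Pm (g \<circ> f)"
  by (simp add: Pm_def wr_mult)

lemma Pm_id: "Pm id = \<one>\<^bsub>wr Om\<^esub>"
  by (simp add: Pm_def wr_one)

lemma Pm_pow: "Pm f [^]\<^bsub>wr Om\<^esub> (n::nat) = Pm (f ^^ n)"
proof (induct n)
  case 0 then show ?case by (simp add: Pm_def wr_one id_def)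
next
  case (Suc n) then show ?case by (simp add: Pm_mult comp_def)
qed

lemma Gm_carrier: "(\<And>x. g x \<in> carrier F2) \<Longrightarrow> Gm g \<in> carrier (wr Om)"
  by (simp add: Gm_def wr_carrier)

lemma Gm_Pm_comm: "(\<And>x. g x \<in> carrier F2) \<Longrightarrow> g \<circ> f = g \<Longrightarrow> Gm g \<otimes>\<^bsub>wr Om\<^esub> Pm f = Pm f \<otimes>\<^bsub>wr Om\<^esub> Gm g"
  by (simp add: Gm_def Pm_def wr_mult F2_red) (metis comp_apply)

lemma Gm_inv: assumes "\<And>x. g x \<in> carrier F2"
  shows "inv\<^bsub>wr Om\<^esub> (Gm g) = (\<lambda>x. fred (inv_word (g x)), id)"
proof -
  interpret W: group "wr Om" by (rule wr_group)
  have c: "(\<lambda>x. fred (inv_word (g x)), id) \<in> carrier (wr Om)"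
    unfolding wr_carrier
  proof (intro conjI allI)
    fix x
    have "fst ` set (inv_word (g x)) \<subseteq> {0, 1}" using assms[of x] by (simp add: fg_carrier)
    then show "fst (\<lambda>x. fred (inv_word (g x)), id) x \<in> carrier F2" by (simp add: fred_in_carrier)
  qed auto
  show ?thesis
    by (rule W.inv_equality[OF _ Gm_carrier[OF assms] c])
       (simp add: Gm_def wr_mult wr_one fred_append_fred1 fred_inv_word_left)
qed

context group
begin

lemma inv_cancel_l: "a \<in> carrier G \<Longrightarrow> z \<in> carrier G \<Longrightarrow> inv a \<otimes> (a \<otimes> z) = z"
  by (simp add: m_assoc[symmetric])

lemma conj_pow: assumes a: "a \<in> carrier G" and x: "x \<in> carrier G"
  shows "(a \<otimes> x \<otimes> inv a) [^] (n::nat) = a \<otimes> x [^] n \<otimes> inv a"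
proof (induct n)
  case 0 then show ?case using a by simp
next
  case (Suc n)
  have "(a \<otimes> x \<otimes> inv a) [^] Suc n = (a \<otimes> x [^] n \<otimes> inv a) \<otimes> (a \<otimes> x \<otimes> inv a)"
    by (simp only: nat_pow_Suc Suc)
  also have "\<dots> = a \<otimes> (x [^] n \<otimes> (inv a \<otimes> (a \<otimes> (x \<otimes> inv a))))"
    using a x by (simp add: m_assoc)
  also have "\<dots> = a \<otimes> (x [^] n \<otimes> (x \<otimes> inv a))"
    using a x by (simp add: inv_cancel_l)
  also have "\<dots> = a \<otimes> x [^] Suc n \<otimes> inv a"
    using a x by (simp add: m_assoc)
  finally show ?case .
qed

lemma conj_mult: "a \<in> carrier G \<Longrightarrow> x \<in> carrier G \<Longrightarrow> y \<in> carrier G \<Longrightarrow>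
   (a \<otimes> x \<otimes> inv a) \<otimes> (a \<otimes> y \<otimes> inv a) = a \<otimes> (x \<otimes> y) \<otimes> inv a"
  by (simp add: m_assoc[symmetric]) (simp add: m_assoc)

lemma comm_inv: assumes a: "a \<in> carrier G" and b: "b \<in> carrier G" and c: "a \<otimes> b = b \<otimes> a"
  shows "inv a \<otimes> b = b \<otimes> inv a"
proof -
  have "inv a \<otimes> b = inv a \<otimes> (b \<otimes> a) \<otimes> inv a" using a b by (simp add: m_assoc)
  also have "\<dots> = inv a \<otimes> (a \<otimes> b) \<otimes> inv a" using c by simp
  also have "\<dots> = b \<otimes> inv a" using a b by (simp add: m_assoc[symmetric])
  finally show ?thesis .
qed

end


definition Omg :: "int \<Rightarrow> int \<Rightarrow> (int \<times> int) set" where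
  "Omg p q = {0..<p} \<times> {0..<q}"

definition pm :: "int \<Rightarrow> int \<Rightarrow> int \<Rightarrow> int \<Rightarrow> int \<times> int \<Rightarrow> int \<times> int" where
  "pm p q \<alpha> \<beta> z = (if z \<in> Omg p q then ((\<alpha> - fst z) mod p, (\<beta> - snd z) mod q) else z)"

lemma finite_Om: "finite (Omg p q)"
  by (simp add: Omg_def)

lemma pm_in: "0 < p \<Longrightarrow> 0 < q \<Longrightarrow> z \<in> Omg p q \<Longrightarrow> pm p q \<alpha> \<beta> z \<in> Omg p q"
  by (simp add: pm_def Omg_def)

lemma pm_invol: assumes "0 < p" "0 < q" shows "pm p q \<alpha> \<beta> (pm p q \<alpha> \<beta> z) = z"
proof (cases "z \<in> Omg p q")
  case True
  obtain i j where z: "z = (i, j)" by (cases z)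
  have "pm p q \<alpha> \<beta> z \<in> Omg p q" using pm_in assms True by blast
  then show ?thesis using True assms z by (simp add: pm_def Omg_def mod_diff_right_eq)
next
  case False then show ?thesis by (simp add: pm_def)
qed

lemma pm_comp_id: "0 < p \<Longrightarrow> 0 < q \<Longrightarrow> pm p q \<alpha> \<beta> \<circ> pm p q \<alpha> \<beta> = id"
  by (auto simp: pm_invol)

lemma pm_bij: "0 < p \<Longrightarrow> 0 < q \<Longrightarrow> bij (pm p q \<alpha> \<beta>)"
  by (rule o_bij[OF pm_comp_id pm_comp_id])

lemma pm_image: assumes "0 < p" "0 < q" shows "pm p q \<alpha> \<beta> ` Omg p q = Omg p q"
proof
  show "pm p q \<alpha> \<beta> ` Omg p q \<subseteq> Omg p q" using pm_in assms by blast
  show "Omg p q \<subseteq> pm p q \<alpha> \<beta> ` Omg p q"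
  proof
    fix z assume "z \<in> Omg p q"
    then show "z \<in> pm p q \<alpha> \<beta> ` Omg p q"
      using pm_invol[OF assms, of \<alpha> \<beta> z] pm_in[OF assms] by (metis image_eqI)
  qed
qed

lemma pm_comp_pow_in:
  assumes "0 < p" "0 < q" "z \<in> Omg p q"
  shows "((pm p q \<alpha>' \<beta>' \<circ> pm p q \<alpha> \<beta>) ^^ n) z =
    ((fst z + int n * (\<alpha>' - \<alpha>)) mod p, (snd z + int n * (\<beta>' - \<beta>)) mod q)"
proof (induct n)
  case 0
  then show ?case using assms by (cases z) (simp add: Omg_def)
next
  case (Suc n)
  let ?z = "((fst z + int n * (\<alpha>' - \<alpha>)) mod p, (snd z + int n * (\<beta>' - \<beta>)) mod q)"
  have zin: "?z \<in> Omg p q" using assms by (simp add: Omg_def)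
  have "pm p q \<alpha> \<beta> ?z = ((\<alpha> - (fst z + int n * (\<alpha>' - \<alpha>))) mod p, (\<beta> - (snd z + int n * (\<beta>' - \<beta>))) mod q)"
    using zin by (simp add: pm_def mod_diff_right_eq)
  moreover have "pm p q \<alpha> \<beta> ?z \<in> Omg p q" using pm_in[OF assms(1,2) zin] .
  ultimately have "pm p q \<alpha>' \<beta>' (pm p q \<alpha> \<beta> ?z) =
      ((\<alpha>' - (\<alpha> - (fst z + int n * (\<alpha>' - \<alpha>)))) mod p, (\<beta>' - (\<beta> - (snd z + int n * (\<beta>' - \<beta>)))) mod q)"
    by (simp add: pm_def mod_diff_right_eq)
  also have "\<dots> = ((fst z + int (Suc n) * (\<alpha>' - \<alpha>)) mod p, (snd z + int (Suc n) * (\<beta>' - \<beta>)) mod q)"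
    by (simp add: algebra_simps)
  finally show ?case using Suc by simp
qed

lemma pm_comp_pow_out:
  assumes "z \<notin> Omg p q"
  shows "((pm p q \<alpha>' \<beta>' \<circ> pm p q \<alpha> \<beta>) ^^ n) z = z"
  by (induct n) (use assms in \<open>auto simp: pm_def\<close>)

lemma pm_order:
  assumes "0 < p" "0 < q" "(int n * (\<alpha>' - \<alpha>)) mod p = 0" "(int n * (\<beta>' - \<beta>)) mod q = 0"
  shows "(pm p q \<alpha>' \<beta>' \<circ> pm p q \<alpha> \<beta>) ^^ n = id"
proof
  fix z
  show "((pm p q \<alpha>' \<beta>' \<circ> pm p q \<alpha> \<beta>) ^^ n) z = id z"
  proof (cases "z \<in> Omg p q")
    case True
    obtain i j where z: "z = (i, j)" by (cases z)
    have "(i + int n * (\<alpha>' - \<alpha>)) mod p = i"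
      using True assms(3) z by (simp add: Omg_def mod_add_right_eq[symmetric])
    moreover have "(j + int n * (\<beta>' - \<beta>)) mod q = j"
      using True assms(4) z by (simp add: Omg_def mod_add_right_eq[symmetric])
    ultimately show ?thesis using pm_comp_pow_in[OF assms(1,2) True] z by simp
  next
    case False then show ?thesis using pm_comp_pow_out by simp
  qed
qed

definition conj_el :: "('p \<Rightarrow> nat word) \<Rightarrow> ('p \<Rightarrow> 'p) \<Rightarrow> 'p set \<Rightarrow> ('p \<Rightarrow> nat word) \<times> ('p \<Rightarrow> 'p)" where
  "conj_el g h Om = Gm g \<otimes>\<^bsub>wr Om\<^esub> Pm h \<otimes>\<^bsub>wr Om\<^esub> inv\<^bsub>wr Om\<^esub> (Gm g)"

lemma conj_el_explicit:
  assumes "\<And>x. g x \<in> carrier F2"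
  shows "conj_el g h Om = (\<lambda>x. fred (g x @ fred (inv_word (g (h x)))), h)"
  using assms by (simp add: conj_el_def Gm_inv[of g Om, OF assms]) (simp add: Gm_def Pm_def wr_mult F2_red)

lemma conj_el_carrier:
  assumes "\<And>x. g x \<in> carrier F2" "bij h" "h ` Om = Om"
  shows "conj_el g h Om \<in> carrier (wr Om)"
proof -
  interpret W: group "wr Om" by (rule wr_group)
  show ?thesis unfolding conj_el_def
    using assms Gm_carrier Pm_carrier by (metis W.inv_closed W.m_closed)
qed

lemma conj_el_rels:
  assumes g: "\<And>x. g x \<in> carrier F2" and h: "bij h" "h ` Om = Om" and f: "bij f" "f ` Om = Om"
    and inv: "g \<circ> f = g" and hh: "h \<circ> h = id"
    and o1: "(f \<circ> h) ^^ n = id" and o2: "(h \<circ> f) ^^ n = id"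
  shows "conj_el g h Om \<otimes>\<^bsub>wr Om\<^esub> conj_el g h Om = \<one>\<^bsub>wr Om\<^esub>"
    and "(conj_el g h Om \<otimes>\<^bsub>wr Om\<^esub> Pm f) [^]\<^bsub>wr Om\<^esub> n = \<one>\<^bsub>wr Om\<^esub>"
    and "(Pm f \<otimes>\<^bsub>wr Om\<^esub> conj_el g h Om) [^]\<^bsub>wr Om\<^esub> n = \<one>\<^bsub>wr Om\<^esub>"
proof -
  interpret W: group "wr Om" by (rule wr_group)
  have G: "Gm g \<in> carrier (wr Om)" using g by (rule Gm_carrier)
  have H: "Pm h \<in> carrier (wr Om)" using h by (rule Pm_carrier)
  have Fc: "Pm f \<in> carrier (wr Om)" using f by (rule Pm_carrier)
  have "(f \<circ> h) ` Om = Om" using f h by (metis image_comp)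
  then have FH: "Pm (f \<circ> h) \<in> carrier (wr Om)" using f h by (intro Pm_carrier bij_comp) auto
  have "(h \<circ> f) ` Om = Om" using f h by (metis image_comp)
  then have HF: "Pm (h \<circ> f) \<in> carrier (wr Om)" using f h by (intro Pm_carrier bij_comp) auto
  have cm: "Gm g \<otimes>\<^bsub>wr Om\<^esub> Pm f = Pm f \<otimes>\<^bsub>wr Om\<^esub> Gm g" using g inv by (rule Gm_Pm_comm)
  have cmi: "inv\<^bsub>wr Om\<^esub> Gm g \<otimes>\<^bsub>wr Om\<^esub> Pm f = Pm f \<otimes>\<^bsub>wr Om\<^esub> inv\<^bsub>wr Om\<^esub> Gm g"
    using W.comm_inv[OF G Fc cm] .
  show "conj_el g h Om \<otimes>\<^bsub>wr Om\<^esub> conj_el g h Om = \<one>\<^bsub>wr Om\<^esub>"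
    unfolding conj_el_def using G H by (simp add: W.conj_mult Pm_mult hh Pm_id[of Om])
  have "conj_el g h Om \<otimes>\<^bsub>wr Om\<^esub> Pm f = Gm g \<otimes>\<^bsub>wr Om\<^esub> (Pm h \<otimes>\<^bsub>wr Om\<^esub> Pm f) \<otimes>\<^bsub>wr Om\<^esub> inv\<^bsub>wr Om\<^esub> Gm g"
    unfolding conj_el_def using G H Fc cmi by (simp add: W.m_assoc)
  then have "(conj_el g h Om \<otimes>\<^bsub>wr Om\<^esub> Pm f) [^]\<^bsub>wr Om\<^esub> n
      = Gm g \<otimes>\<^bsub>wr Om\<^esub> Pm (f \<circ> h) [^]\<^bsub>wr Om\<^esub> n \<otimes>\<^bsub>wr Om\<^esub> inv\<^bsub>wr Om\<^esub> Gm g"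
    using G H Fc FH HF by (simp add: Pm_mult W.conj_pow)
  then show "(conj_el g h Om \<otimes>\<^bsub>wr Om\<^esub> Pm f) [^]\<^bsub>wr Om\<^esub> n = \<one>\<^bsub>wr Om\<^esub>"
    using G by (simp add: Pm_pow o1 Pm_id[of Om])
  have "Pm f \<otimes>\<^bsub>wr Om\<^esub> conj_el g h Om = Gm g \<otimes>\<^bsub>wr Om\<^esub> (Pm f \<otimes>\<^bsub>wr Om\<^esub> Pm h) \<otimes>\<^bsub>wr Om\<^esub> inv\<^bsub>wr Om\<^esub> Gm g"
    unfolding conj_el_def using G H Fc cm by (simp add: W.m_assoc[symmetric])
  then have "(Pm f \<otimes>\<^bsub>wr Om\<^esub> conj_el g h Om) [^]\<^bsub>wr Om\<^esub> n
      = Gm g \<otimes>\<^bsub>wr Om\<^esub> Pm (h \<circ> f) [^]\<^bsub>wr Om\<^esub> n \<otimes>\<^bsub>wr Om\<^esub> inv\<^bsub>wr Om\<^esub> Gm g"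
    using G H Fc FH HF by (simp add: Pm_mult W.conj_pow)
  then show "(Pm f \<otimes>\<^bsub>wr Om\<^esub> conj_el g h Om) [^]\<^bsub>wr Om\<^esub> n = \<one>\<^bsub>wr Om\<^esub>"
    using G by (simp add: Pm_pow o2 Pm_id[of Om])
qed


lemma m1: "1 < p \<Longrightarrow> (-1::int) mod p = p - 1"
  by (simp add: zmod_zminus1_eq_if)

lemma m2: "1 < p \<Longrightarrow> (-(p - 1)::int) mod p = 1"
proof -
  assume "1 < p"
  have "(-(p - 1)::int) = 1 + p * (-1)" by simp
  then show ?thesis using \<open>1 < p\<close> by (simp only: mod_mult_self1) simp
qed

definition gA :: "int \<times> int \<Rightarrow> nat word" where
  "gA z = (if z = (0, 0) then [(0, True)] else [])"

definition gC :: "int \<Rightarrow> int \<Rightarrow> int \<times> int \<Rightarrow> nat word" where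
  "gC p q z = (if z = (1, 1) \<or> z = (p - 1, q - 1) then [(1, True)] else [])"

definition sA :: "int \<Rightarrow> int \<Rightarrow> (int \<times> int \<Rightarrow> nat word) \<times> (int \<times> int \<Rightarrow> int \<times> int)" where
  "sA p q = conj_el gA (pm p q 1 0) (Omg p q)"

definition sB :: "int \<Rightarrow> int \<Rightarrow> (int \<times> int \<Rightarrow> nat word) \<times> (int \<times> int \<Rightarrow> int \<times> int)" where
  "sB p q = Pm (pm p q 0 0)"

definition sC :: "int \<Rightarrow> int \<Rightarrow> (int \<times> int \<Rightarrow> nat word) \<times> (int \<times> int \<Rightarrow> int \<times> int)" where
  "sC p q = conj_el (gC p q) (pm p q 0 1) (Omg p q)"

lemma gA_car: "gA z \<in> carrier F2"
  by (simp add: gA_def fg_carrier)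

lemma gC_car: "gC p q z \<in> carrier F2"
  by (simp add: gC_def fg_carrier)

lemma invol_mem:
  assumes "\<And>z. f (f z) = z" "\<And>a. a \<in> S \<Longrightarrow> f a \<in> S"
  shows "f z \<in> S \<longleftrightarrow> z \<in> S"
  using assms by metis

context
  fixes p q :: int
  assumes p3: "3 \<le> p" and q3: "3 \<le> q"
begin

lemma pp: "0 < p" "1 < p" using p3 by auto
lemma qq: "0 < q" "1 < q" using q3 by auto

lemma pt1: "pm p q 0 1 (0, 0) = (0, 1)"
  using pp qq by (simp add: pm_def Omg_def)
lemma pt2: "pm p q 1 0 (0, 1) = (1, q - 1)"
  using pp qq by (simp add: pm_def Omg_def m1)
lemma pt3: "pm p q 0 0 (1, q - 1) = (p - 1, 1)"
  using pp qq by (simp add: pm_def Omg_def m1 m2)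
lemma pt4: "pm p q 0 1 (p - 1, 1) = (1, 0)"
  using pp qq by (simp add: pm_def Omg_def m2)
lemma pt5: "pm p q 1 0 (1, 0) = (0, 0)"
  using pp qq by (simp add: pm_def Omg_def)
lemma pt6: "pm p q 0 0 (1, 0) = (p - 1, 0)"
  using pp qq by (simp add: pm_def Omg_def m1)
lemma pt7: "pm p q 0 1 (p - 1, 0) = (1, 1)"
  using pp qq by (simp add: pm_def Omg_def m2)
lemma pt8: "pm p q 1 0 (1, 1) = (0, q - 1)"
  using pp qq by (simp add: pm_def Omg_def m1)
lemma pt9: "pm p q 0 0 (0, q - 1) = (0, 1)"
  using pp qq by (simp add: pm_def Omg_def m2)
lemma pt10: "pm p q 0 1 (0, 1) = (0, 0)"
  using pp qq by (simp add: pm_def Omg_def)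
lemma pt11: "pm p q 0 0 (0, 0) = (0, 0)"
  using pp qq by (simp add: pm_def Omg_def)
lemma pt12: "pm p q 0 0 (1, 1) = (p - 1, q - 1)"
  using pp qq by (simp add: pm_def Omg_def m1)
lemma pt13: "pm p q 0 0 (p - 1, q - 1) = (1, 1)"
  using pp qq by (simp add: pm_def Omg_def m2)

lemmas pts = pt1 pt2 pt3 pt4 pt5 pt6 pt7 pt8 pt9 pt10

lemma gA_inv: "gA \<circ> pm p q 0 0 = gA"
proof
  fix z
  have "pm p q 0 0 z \<in> {(0, 0)} \<longleftrightarrow> z \<in> {(0, 0)}"
    by (rule invol_mem) (use pp qq pm_invol pt11 in auto)
  then show "(gA \<circ> pm p q 0 0) z = gA z" by (simp add: gA_def)
qed

lemma gC_inv: "gC p q \<circ> pm p q 0 0 = gC p q"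
proof
  fix z
  have "pm p q 0 0 z \<in> {(1, 1), (p - 1, q - 1)} \<longleftrightarrow> z \<in> {(1, 1), (p - 1, q - 1)}"
    by (rule invol_mem) (use pp qq pm_invol pt12 pt13 in auto)
  then show "(gC p q \<circ> pm p q 0 0) z = gC p q z" by (simp add: gC_def)
qed

lemma sA_exp: "sA p q = (\<lambda>x. fred (gA x @ fred (inv_word (gA (pm p q 1 0 x)))), pm p q 1 0)"
  unfolding sA_def by (rule conj_el_explicit[OF gA_car])

lemma sC_exp: "sC p q = (\<lambda>x. fred (gC p q x @ fred (inv_word (gC p q (pm p q 0 1 x)))), pm p q 0 1)"
  unfolding sC_def by (rule conj_el_explicit[OF gC_car])

lemma sA_car: "sA p q \<in> carrier (wr (Omg p q))"
  unfolding sA_def using pp qq by (intro conj_el_carrier gA_car pm_bij pm_image) auto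
lemma sB_car: "sB p q \<in> carrier (wr (Omg p q))"
  unfolding sB_def using pp qq by (intro Pm_carrier pm_bij pm_image) auto
lemma sC_car: "sC p q \<in> carrier (wr (Omg p q))"
  unfolding sC_def using pp qq by (intro conj_el_carrier gC_car pm_bij pm_image) auto

lemma oA1: "(pm p q 0 0 \<circ> pm p q 1 0) ^^ nat p = id"
  by (rule pm_order) (use pp qq in simp_all)
lemma oA2: "(pm p q 1 0 \<circ> pm p q 0 0) ^^ nat p = id"
  by (rule pm_order) (use pp qq in simp_all)
lemma oC1: "(pm p q 0 0 \<circ> pm p q 0 1) ^^ nat q = id"
  by (rule pm_order) (use pp qq in simp_all)
lemma oC2: "(pm p q 0 1 \<circ> pm p q 0 0) ^^ nat q = id"
  by (rule pm_order) (use pp qq in simp_all)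

lemma relsA:
  shows "sA p q \<otimes>\<^bsub>wr (Omg p q)\<^esub> sA p q = \<one>\<^bsub>wr (Omg p q)\<^esub>"
    and "(sA p q \<otimes>\<^bsub>wr (Omg p q)\<^esub> sB p q) [^]\<^bsub>wr (Omg p q)\<^esub> nat p = \<one>\<^bsub>wr (Omg p q)\<^esub>"
    and "(sB p q \<otimes>\<^bsub>wr (Omg p q)\<^esub> sA p q) [^]\<^bsub>wr (Omg p q)\<^esub> nat p = \<one>\<^bsub>wr (Omg p q)\<^esub>"
  unfolding sA_def sB_def
  using conj_el_rels[OF gA_car pm_bij[OF pp(1) qq(1)] pm_image[OF pp(1) qq(1)] pm_bij[OF pp(1) qq(1)]
      pm_image[OF pp(1) qq(1)] gA_inv pm_comp_id[OF pp(1) qq(1)] oA1 oA2] by auto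

lemma relsC:
  shows "sC p q \<otimes>\<^bsub>wr (Omg p q)\<^esub> sC p q = \<one>\<^bsub>wr (Omg p q)\<^esub>"
    and "(sC p q \<otimes>\<^bsub>wr (Omg p q)\<^esub> sB p q) [^]\<^bsub>wr (Omg p q)\<^esub> nat q = \<one>\<^bsub>wr (Omg p q)\<^esub>"
    and "(sB p q \<otimes>\<^bsub>wr (Omg p q)\<^esub> sC p q) [^]\<^bsub>wr (Omg p q)\<^esub> nat q = \<one>\<^bsub>wr (Omg p q)\<^esub>"
  unfolding sC_def sB_def
  using conj_el_rels[OF gC_car pm_bij[OF pp(1) qq(1)] pm_image[OF pp(1) qq(1)] pm_bij[OF pp(1) qq(1)]
      pm_image[OF pp(1) qq(1)] gC_inv pm_comp_id[OF pp(1) qq(1)] oC1 oC2] by auto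

lemma relsB: "sB p q \<otimes>\<^bsub>wr (Omg p q)\<^esub> sB p q = \<one>\<^bsub>wr (Omg p q)\<^esub>"
  unfolding sB_def using pp qq by (simp add: Pm_mult pm_comp_id Pm_id[of "Omg p q"])

abbreviation (input) W where "W \<equiv> wr (Omg p q)"

lemma walk1:
  defines "k \<equiv> sC p q \<otimes>\<^bsub>W\<^esub> (sA p q \<otimes>\<^bsub>W\<^esub> (sB p q \<otimes>\<^bsub>W\<^esub> (sC p q \<otimes>\<^bsub>W\<^esub> (sA p q \<otimes>\<^bsub>W\<^esub> \<one>\<^bsub>W\<^esub>))))"
  shows "snd k (0, 0) = (0, 0)" and "fst k (0, 0) = [(0, False)]"
  unfolding k_def using p3 q3
  by (simp_all add: wr_mult_fst wr_mult_snd wr_one sA_exp sC_exp sB_def Pm_def pts gA_def gC_def inv_word_def)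

lemma walk2:
  defines "k \<equiv> sC p q \<otimes>\<^bsub>W\<^esub> (sA p q \<otimes>\<^bsub>W\<^esub> (sB p q \<otimes>\<^bsub>W\<^esub> (sC p q \<otimes>\<^bsub>W\<^esub> (sB p q \<otimes>\<^bsub>W\<^esub>
     (sC p q \<otimes>\<^bsub>W\<^esub> (sA p q \<otimes>\<^bsub>W\<^esub> (sB p q \<otimes>\<^bsub>W\<^esub> (sC p q \<otimes>\<^bsub>W\<^esub> \<one>\<^bsub>W\<^esub>))))))))"
  shows "snd k (0, 0) = (0, 0)" and "fst k (0, 0) = [(1, False)]"
  unfolding k_def using p3 q3
  by (simp_all add: wr_mult_fst wr_mult_snd wr_one sA_exp sC_exp sB_def Pm_def pts gA_def gC_def inv_word_def)

end


definition ends :: "'a \<times> 'b \<times> 'a \<Rightarrow> 'a set" where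
  "ends e = {fst e, snd (snd e)}"

lemma two_leaves:
  assumes lot: "is_LOT V E" and c3: "card V \<ge> 3"
  obtains a0 c0 e1 e2 where "a0 \<in> V" "c0 \<in> V" "a0 \<noteq> c0" "e1 \<in> E" "e2 \<in> E" "e1 \<noteq> e2"
    "\<And>e. e \<in> E \<Longrightarrow> a0 \<in> ends e \<longleftrightarrow> e = e1"
    "\<And>e. e \<in> E \<Longrightarrow> c0 \<in> ends e \<longleftrightarrow> e = e2"
proof -
  let ?R = "{(x, y). \<exists>w. (x, w, y) \<in> E \<or> (y, w, x) \<in> E}"
  have finV: "finite V" and finE: "finite E" and cardE: "card E = card V - 1"
    using lot unfolding is_LOT_def by auto
  have edges: "\<And>x w y. (x, w, y) \<in> E \<Longrightarrow> x \<in> V \<and> y \<in> V \<and> x \<noteq> y"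
  proof -
    fix x w y assume "(x, w, y) \<in> E"
    moreover have "\<forall>(x, w, y) \<in> E. x \<in> V \<and> y \<in> V \<and> x \<noteq> y \<and> fst ` set w \<subseteq> V"
      using lot unfolding is_LOT_def by blast
    ultimately show "x \<in> V \<and> y \<in> V \<and> x \<noteq> y" by fastforce
  qed
  have conn: "\<And>u v. u \<in> V \<Longrightarrow> v \<in> V \<Longrightarrow> (u, v) \<in> ?R\<^sup>*"
    using lot unfolding is_LOT_def by blast
  define D where "D v = {e \<in> E. v \<in> ends e}" for v
  have ends_sub: "\<And>e. e \<in> E \<Longrightarrow> ends e \<subseteq> V"
    using edges by (force simp: ends_def)
  have ends_card: "\<And>e. e \<in> E \<Longrightarrow> card (ends e) = 2"
    using edges by (force simp: ends_def)
  have Rstep: "\<And>y z. (y, z) \<in> ?R \<Longrightarrow> \<exists>e\<in>E. y \<in> ends e \<and> z \<in> ends e"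
    by (force simp: ends_def)
  have Dne: "D v \<noteq> {}" if v: "v \<in> V" for v
  proof -
    have "V - {v} \<noteq> {}"
    proof
      assume "V - {v} = {}"
      then have "V \<subseteq> {v}" by auto
      then have "card V \<le> card {v}" by (intro card_mono) auto
      then have "card V \<le> 1" by simp
      then show False using c3 by simp
    qed
    then obtain u where u: "u \<in> V" "u \<noteq> v" by auto
    have "(v, u) \<in> ?R\<^sup>*" using conn v u by auto
    then have "\<exists>z. (v, z) \<in> ?R"
      using u(2) by (induct rule: converse_rtrancl_induct) auto
    then obtain z where "(v, z) \<in> ?R" by blast
    then show ?thesis using Rstep unfolding D_def by blast
  qed
  have Dfin: "finite (D v)" for v using finE by (simp add: D_def)
  have sumD: "(\<Sum>v\<in>V. card (D v)) = 2 * card E"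
  proof -
    have "(\<Sum>v\<in>V. card (D v)) = (\<Sum>v\<in>V. \<Sum>e\<in>E. (of_bool (v \<in> ends e) :: nat))"
      using finE by (simp add: D_def Int_def)
    also have "\<dots> = (\<Sum>e\<in>E. \<Sum>v\<in>V. (of_bool (v \<in> ends e) :: nat))"
      by (rule sum.swap)
    also have "\<dots> = (\<Sum>e\<in>E. (2::nat))"
    proof (rule sum.cong)
      fix e assume e: "e \<in> E"
      have "V \<inter> {v. v \<in> ends e} = ends e" using ends_sub[OF e] by auto
      then show "(\<Sum>v\<in>V. (of_bool (v \<in> ends e) :: nat)) = 2" using finV ends_card[OF e] by simp
    qed simp
    finally show ?thesis by simp
  qed
  define L where "L = {v \<in> V. card (D v) \<le> 1}"
  have LV: "L \<subseteq> V" by (auto simp: L_def)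
  have finL: "finite L" using finV LV finite_subset by blast
  have "(\<Sum>v\<in>V. (if v \<in> L then 1 else 2)) \<le> (\<Sum>v\<in>V. card (D v))"
  proof (rule sum_mono)
    fix v assume v: "v \<in> V"
    have "card (D v) \<ge> 1" using Dne[OF v] Dfin[of v] by (simp add: Suc_le_eq card_gt_0_iff)
    then show "(if v \<in> L then 1 else 2) \<le> card (D v)" using v by (auto simp: L_def)
  qed
  moreover have "(\<Sum>v\<in>V. (if v \<in> L then 1 else 2)) = card L + 2 * (card V - card L)"
  proof -
    have "(\<Sum>v\<in>V. (if v \<in> L then 1 else 2)) = (\<Sum>v\<in>L. 1) + (\<Sum>v\<in>V - L. 2)"
      using finV LV by (simp add: sum.If_cases Int_absorb1 Diff_eq[symmetric]) 
    also have "\<dots> = card L + 2 * card (V - L)" by simp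
    also have "card (V - L) = card V - card L" using finL LV by (simp add: card_Diff_subset)
    finally show ?thesis .
  qed
  ultimately have "card L + 2 * (card V - card L) \<le> 2 * (card V - 1)" using sumD cardE by simp
  moreover have "card L \<le> card V" using finV LV by (simp add: card_mono)
  ultimately have "card L \<ge> 2" using c3 by linarith
  then have "\<not> (\<forall>a\<in>L. \<forall>b\<in>L. a = b)" using card_le_Suc0_iff_eq[OF finL] by auto
  then obtain a0 c0 where a0: "a0 \<in> L" and c0: "c0 \<in> L" and ac: "a0 \<noteq> c0" by blast
  have one: "card (D v) = 1" if "v \<in> L" for v
    using that Dne[of v] Dfin[of v] by (auto simp: L_def card_gt_0_iff le_Suc_eq)
  obtain e1 where e1: "D a0 = {e1}" using one[OF a0] by (auto simp: card_1_singleton_iff)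
  obtain e2 where e2: "D c0 = {e2}" using one[OF c0] by (auto simp: card_1_singleton_iff)
  have e1E: "e1 \<in> E" and e2E: "e2 \<in> E" using e1 e2 by (auto simp: D_def)
  have ia: "\<And>e. e \<in> E \<Longrightarrow> a0 \<in> ends e \<longleftrightarrow> e = e1" using e1 by (auto simp: D_def)
  have ic: "\<And>e. e \<in> E \<Longrightarrow> c0 \<in> ends e \<longleftrightarrow> e = e2" using e2 by (auto simp: D_def)
  have ne: "e1 \<noteq> e2"
  proof
    assume eq: "e1 = e2"
    have a0e: "a0 \<in> ends e1" and c0e: "c0 \<in> ends e1" using ia ic e1E eq by auto
    have ee: "ends e1 = {a0, c0}"
    proof -
      have "{a0, c0} \<subseteq> ends e1" using a0e c0e by auto
      moreover have "card {a0, c0} = 2" using ac by simp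
      moreover have "finite (ends e1)" by (simp add: ends_def)
      ultimately show ?thesis using ends_card[OF e1E] by (metis card_subset_eq)
    qed
    have "V \<subseteq> {a0, c0}"
    proof
      fix u assume u: "u \<in> V"
      have "(a0, u) \<in> ?R\<^sup>*" using conn a0 u LV by auto
      then show "u \<in> {a0, c0}"
      proof (induct rule: rtrancl_induct)
        case base then show ?case by simp
      next
        case (step y z)
        obtain e where e: "e \<in> E" "y \<in> ends e" "z \<in> ends e" using Rstep[OF step(2)] by blast
        have "e = e1"
        proof (cases "y = a0")
          case True then show ?thesis using ia[OF e(1)] e(2) by simp
        next
          case False then have "y = c0" using step(3) by simp
          then show ?thesis using ic[OF e(1)] e(2) eq by simp
        qed
        then show ?case using e ee by auto
      qed
    qed
    then have "card V \<le> card {a0, c0}" by (intro card_mono) auto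
    then have "card V \<le> 2" using ac by simp
    then show False using c3 by simp
  qed
  show ?thesis
    by (rule that[of a0 c0 e1 e2]) (use a0 c0 LV ac e1E e2E ne ia ic in auto)
qed


lemma LOT_relator_letters: "fst ` set (LOT_relator (x, w, y)) = insert x (insert y (fst ` set w))"
  by (auto simp: LOT_relator_def inv_word_append image_Un)

theorem theorem4p1:
  fixes V :: "'a set" and E :: "('a \<times> 'a word \<times> 'a) set"
  assumes "is_LOT V E"
    and "coxeter_type E"
    and "card V \<ge> 3"
    and "\<forall>e \<in> E. \<exists>m. coxeter_label e m \<and> m \<ge> 3"
  shows "large (LOT_group V E)"
proof -
  note lot = assms(1)
  obtain a0 c0 e1 e2 where a0: "a0 \<in> V" and c0: "c0 \<in> V" and ac: "a0 \<noteq> c0"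
    and e1E: "e1 \<in> E" and e2E: "e2 \<in> E" and e12: "e1 \<noteq> e2"
    and ia: "\<And>e. e \<in> E \<Longrightarrow> a0 \<in> ends e \<longleftrightarrow> e = e1"
    and ic: "\<And>e. e \<in> E \<Longrightarrow> c0 \<in> ends e \<longleftrightarrow> e = e2"
    using two_leaves[OF assms(1) assms(3)] by metis
  have finV: "finite V" using lot by (simp add: is_LOT_def)
  have edges: "\<And>x w y. (x, w, y) \<in> E \<Longrightarrow> x \<in> V \<and> y \<in> V \<and> x \<noteq> y \<and> fst ` set w \<subseteq> V"
  proof -
    fix x w y assume "(x, w, y) \<in> E"
    moreover have "\<forall>(x, w, y) \<in> E. x \<in> V \<and> y \<in> V \<and> x \<noteq> y \<and> fst ` set w \<subseteq> V"
      using lot unfolding is_LOT_def by blast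
    ultimately show "x \<in> V \<and> y \<in> V \<and> x \<noteq> y \<and> fst ` set w \<subseteq> V" by fastforce
  qed
  obtain b0 where b0: "b0 \<in> V" "b0 \<noteq> a0" "b0 \<noteq> c0"
  proof -
    have "\<not> V \<subseteq> {a0, c0}"
    proof
      assume "V \<subseteq> {a0, c0}"
      then have "card V \<le> card {a0, c0}" by (intro card_mono) auto
      then show False using assms(3) ac by simp
    qed
    then show ?thesis using that by blast
  qed
  define me :: "'a \<times> 'a word \<times> 'a \<Rightarrow> nat" where "me e = (SOME m. coxeter_label e m \<and> m \<ge> 3)" for e
  have meP: "coxeter_label e (me e) \<and> me e \<ge> 3" if "e \<in> E" for e
    unfolding me_def by (rule someI_ex) (use assms(4) that in blast)
  define p where "p = int (me e1)"
  define q where "q = int (me e2)"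
  have p3: "3 \<le> p" and q3: "3 \<le> q" using meP[OF e1E] meP[OF e2E] by (auto simp: p_def q_def)
  have np: "nat p = me e1" and nq: "nat q = me e2" by (auto simp: p_def q_def)
  define K where "K = wr (Omg p q)"
  define s where "s v = (if v = a0 then sA p q else if v = c0 then sC p q else sB p q)" for v
  interpret K: group K unfolding K_def by (rule wr_group)
  have s_car: "\<And>v. s v \<in> carrier K"
    unfolding s_def K_def using sA_car[OF p3 q3] sB_car[OF p3 q3] sC_car[OF p3 q3] by auto
  have s_inv: "\<And>v. s v \<otimes>\<^bsub>K\<^esub> s v = \<one>\<^bsub>K\<^esub>"
    unfolding s_def K_def using relsA(1)[OF p3 q3] relsB[OF p3 q3] relsC(1)[OF p3 q3] by auto
  have sa: "s a0 = sA p q" and sc: "s c0 = sC p q" and sb: "\<And>v. v \<noteq> a0 \<Longrightarrow> v \<noteq> c0 \<Longrightarrow> s v = sB p q"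
    using ac by (auto simp: s_def)
  have rels: "\<And>r. r \<in> LOT_relator ` E \<Longrightarrow> fst ` set r \<subseteq> V \<and> ev K s r = \<one>\<^bsub>K\<^esub>"
  proof -
    fix r assume "r \<in> LOT_relator ` E"
    then obtain x w y where e: "(x, w, y) \<in> E" and r: "r = LOT_relator (x, w, y)" by auto
    have xy: "x \<in> V" "y \<in> V" "x \<noteq> y" "fst ` set w \<subseteq> V" using edges[OF e] by auto
    have pw: "(s y \<otimes>\<^bsub>K\<^esub> s x) [^]\<^bsub>K\<^esub> me (x, w, y) = \<one>\<^bsub>K\<^esub>"
    proof (cases "(x, w, y) = e1")
      case True
      then have m: "me (x, w, y) = nat p" using np by simp
      have "a0 \<in> ends (x, w, y)" using ia[OF e] True by blast
      then have "a0 \<in> {x, y}" by (simp add: ends_def)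
      moreover have "c0 \<notin> {x, y}" using ic[OF e] True e12 by (auto simp: ends_def)
      ultimately consider "x = a0" "y \<noteq> a0" "y \<noteq> c0" | "y = a0" "x \<noteq> a0" "x \<noteq> c0" using xy(3) by auto
      then show ?thesis
      proof cases
        case 1 then show ?thesis using relsA(3)[OF p3 q3] m sa sb by (simp add: K_def)
      next
        case 2 then show ?thesis using relsA(2)[OF p3 q3] m sa sb by (simp add: K_def)
      qed
    next
      case n1: False
      show ?thesis
      proof (cases "(x, w, y) = e2")
        case True
        then have m: "me (x, w, y) = nat q" using nq by simp
        have "c0 \<in> ends (x, w, y)" using ic[OF e] True by blast
        then have "c0 \<in> {x, y}" by (simp add: ends_def)
        moreover have "a0 \<notin> {x, y}" using ia[OF e] True e12 by (auto simp: ends_def)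
        ultimately consider "x = c0" "y \<noteq> a0" "y \<noteq> c0" | "y = c0" "x \<noteq> a0" "x \<noteq> c0" using xy(3) by auto
        then show ?thesis
        proof cases
          case 1 then show ?thesis using relsC(3)[OF p3 q3] m sc sb by (simp add: K_def)
        next
          case 2 then show ?thesis using relsC(2)[OF p3 q3] m sc sb by (simp add: K_def)
        qed
      next
        case False
        have "a0 \<notin> {x, y}" using ia[OF e] n1 by (auto simp: ends_def)
        moreover have "c0 \<notin> {x, y}" using ic[OF e] False by (auto simp: ends_def)
        ultimately have "s x = sB p q" "s y = sB p q" using sb by auto
        then have "s y \<otimes>\<^bsub>K\<^esub> s x = \<one>\<^bsub>K\<^esub>" using s_inv[of x] by simp
        then show ?thesis by simp
      qed
    qed
    have "ev K s (LOT_relator (x, w, y)) = \<one>\<^bsub>K\<^esub>"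
      by (rule K.relator_trivial[OF s_car s_inv _ pw]) (use meP[OF e] in auto)
    moreover have "fst ` set r \<subseteq> V" using xy by (simp add: r LOT_relator_letters)
    ultimately show "fst ` set r \<subseteq> V \<and> ev K s r = \<one>\<^bsub>K\<^esub>" using r by simp
  qed
  let ?G = "LOT_group V E"
  let ?N = "relator_closure V (LOT_relator ` E)"
  have Gg: "group ?G" unfolding LOT_group_def
    by (rule presented_group_is_group) (use rels in blast)
  interpret Gr: group ?G by (rule Gg)
  note PI = presented_indhom[where rels = "LOT_relator ` E" and gens = V, OF K.group_axioms s_car rels, folded LOT_group_def]
  have PI2: "\<And>w. w \<in> carrier (free_group V) \<Longrightarrow> ?N #>\<^bsub>free_group V\<^esub> w \<in> carrier ?G
      \<and> indhom K s (?N #>\<^bsub>free_group V\<^esub> w) = ev K s w"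
    using PI(2) by blast
  define Phi where "Phi = indhom K s"
  have Phi_hom: "Phi \<in> hom ?G K" using PI(1) by (simp add: Phi_def)
  interpret Ph: group_hom ?G K Phi
    by (unfold_locales) (rule Phi_hom)
  have Kcar: "\<And>k. k \<in> carrier K \<Longrightarrow> bij (snd k) \<and> snd k ` Omg p q = Omg p q \<and> (\<forall>x. fst k x \<in> carrier F2)"
    by (simp add: K_def wr_carrier)
  have Kmult_fst: "\<And>k l x. fst (k \<otimes>\<^bsub>K\<^esub> l) x = fred (fst k x @ fst l (snd k x))"
    by (simp add: K_def wr_mult_fst)
  have Kmult_snd: "\<And>k l. snd (k \<otimes>\<^bsub>K\<^esub> l) = snd l \<circ> snd k"
    by (simp add: K_def wr_mult_snd)
  have Kone: "\<one>\<^bsub>K\<^esub> = (\<lambda>x. [], id)" by (simp add: K_def wr_one)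
  have inv_snd: "\<And>k. k \<in> carrier K \<Longrightarrow> snd (inv\<^bsub>K\<^esub> k) \<circ> snd k = id"
  proof -
    fix k assume k: "k \<in> carrier K"
    have "snd (k \<otimes>\<^bsub>K\<^esub> inv\<^bsub>K\<^esub> k) = id" using k by (simp add: Kone)
    then show "snd (inv\<^bsub>K\<^esub> k) \<circ> snd k = id" by (simp add: Kmult_snd)
  qed
  define x0 where "x0 = ((0::int), (0::int))"
  have x0O: "x0 \<in> Omg p q" using p3 q3 by (simp add: x0_def Omg_def)
  define H where "H = {A \<in> carrier ?G. snd (Phi A) x0 = x0}"
  have subH: "subgroup H ?G"
  proof (rule Gr.subgroupI)
    show "H \<subseteq> carrier ?G" by (auto simp: H_def)
    have "\<one>\<^bsub>?G\<^esub> \<in> H" by (simp add: H_def Kone)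
    then show "H \<noteq> {}" by blast
  next
    fix A assume A: "A \<in> H"
    then have Ac: "A \<in> carrier ?G" and Ax: "snd (Phi A) x0 = x0" by (auto simp: H_def)
    have k: "Phi A \<in> carrier K" using Ac by simp
    have "snd (inv\<^bsub>K\<^esub> (Phi A)) x0 = x0"
      using fun_cong[OF inv_snd[OF k], of x0] Ax by simp
    then show "inv\<^bsub>?G\<^esub> A \<in> H" using Ac by (simp add: H_def Ph.hom_inv)
  next
    fix A B assume "A \<in> H" "B \<in> H"
    then show "A \<otimes>\<^bsub>?G\<^esub> B \<in> H" by (auto simp: H_def Kmult_snd)
  qed
  have cos: "H #>\<^bsub>?G\<^esub> A = {B \<in> carrier ?G. snd (Phi B) x0 = snd (Phi A) x0}" if A: "A \<in> carrier ?G" for A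
  proof
    show "H #>\<^bsub>?G\<^esub> A \<subseteq> {B \<in> carrier ?G. snd (Phi B) x0 = snd (Phi A) x0}"
      using A by (auto simp: r_coset_def H_def Kmult_snd)
  next
    show "{B \<in> carrier ?G. snd (Phi B) x0 = snd (Phi A) x0} \<subseteq> H #>\<^bsub>?G\<^esub> A"
    proof
      fix B assume "B \<in> {B \<in> carrier ?G. snd (Phi B) x0 = snd (Phi A) x0}"
      then have B: "B \<in> carrier ?G" and Bx: "snd (Phi B) x0 = snd (Phi A) x0" by auto
      have kA: "Phi A \<in> carrier K" using A by simp
      have "snd (Phi (B \<otimes>\<^bsub>?G\<^esub> inv\<^bsub>?G\<^esub> A)) x0 = snd (inv\<^bsub>K\<^esub> (Phi A)) (snd (Phi A) x0)"
        using A B Bx by (simp add: Ph.hom_inv Kmult_snd)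
      also have "\<dots> = x0" using fun_cong[OF inv_snd[OF kA], of x0] by simp
      finally have "B \<otimes>\<^bsub>?G\<^esub> inv\<^bsub>?G\<^esub> A \<in> H" using A B by (simp add: H_def)
      moreover have "B = (B \<otimes>\<^bsub>?G\<^esub> inv\<^bsub>?G\<^esub> A) \<otimes>\<^bsub>?G\<^esub> A" using A B by (simp add: Gr.m_assoc)
      ultimately show "B \<in> H #>\<^bsub>?G\<^esub> A" by (auto simp: r_coset_def)
    qed
  qed
  have fin: "finite (rcosets\<^bsub>?G\<^esub> H)"
  proof (rule finite_subset)
    show "rcosets\<^bsub>?G\<^esub> H \<subseteq> (\<lambda>z. {B \<in> carrier ?G. snd (Phi B) x0 = z}) ` Omg p q"
    proof
      fix C assume "C \<in> rcosets\<^bsub>?G\<^esub> H"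
      then obtain A where A: "A \<in> carrier ?G" and C: "C = H #>\<^bsub>?G\<^esub> A" by (auto simp: RCOSETS_def)
      have "snd (Phi A) x0 \<in> Omg p q" using Kcar[of "Phi A"] A x0O by auto
      then show "C \<in> (\<lambda>z. {B \<in> carrier ?G. snd (Phi B) x0 = z}) ` Omg p q"
        using cos[OF A] C by auto
    qed
    show "finite ((\<lambda>z. {B \<in> carrier ?G. snd (Phi B) x0 = z}) ` Omg p q)" by (simp add: finite_Om)
  qed
  define psi where "psi A = fst (Phi A) x0" for A
  have psi_hom: "psi \<in> hom (?G\<lparr>carrier := H\<rparr>) F2"
  proof (rule homI)
    fix A assume "A \<in> carrier (?G\<lparr>carrier := H\<rparr>)"
    then have "Phi A \<in> carrier K" by (simp add: H_def)
    then show "psi A \<in> carrier F2" using Kcar unfolding psi_def by blast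
  next
    fix A B assume "A \<in> carrier (?G\<lparr>carrier := H\<rparr>)" "B \<in> carrier (?G\<lparr>carrier := H\<rparr>)"
    then have A: "A \<in> H" and B: "B \<in> H" by auto
    then show "psi (A \<otimes>\<^bsub>?G\<lparr>carrier := H\<rparr>\<^esub> B) = psi A \<otimes>\<^bsub>F2\<^esub> psi B"
      by (auto simp: psi_def H_def Kmult_fst fg_mult)
  qed
  have HG: "group (?G\<lparr>carrier := H\<rparr>)" by (rule Gr.subgroup_imp_group[OF subH])
  interpret Ps: group_hom "?G\<lparr>carrier := H\<rparr>" F2 psi
    unfolding group_hom_def group_hom_axioms_def using HG fg_group psi_hom by blast
  have Tsub: "subgroup (psi ` H) F2" using Ps.img_is_subgroup by simp
  have hit: "\<And>w. w \<in> carrier (free_group V) \<Longrightarrow> snd (ev K s w) x0 = x0 \<Longrightarrow> fst (ev K s w) x0 \<in> psi ` H"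
  proof -
    fix w assume w: "w \<in> carrier (free_group V)" and wx: "snd (ev K s w) x0 = x0"
    have "?N #>\<^bsub>free_group V\<^esub> w \<in> carrier ?G" and e: "Phi (?N #>\<^bsub>free_group V\<^esub> w) = ev K s w"
      using PI2[OF w] by (auto simp: Phi_def)
    then have "?N #>\<^bsub>free_group V\<^esub> w \<in> H" using wx by (simp add: H_def)
    then show "fst (ev K s w) x0 \<in> psi ` H" using e by (metis image_eqI psi_def)
  qed
  define w1 where "w1 = [(c0, False), (a0, False), (b0, False), (c0, False), (a0, False)]"
  define w2 where "w2 = [(c0, False), (a0, False), (b0, False), (c0, False), (b0, False),
     (c0, False), (a0, False), (b0, False), (c0, False)]"
  have w1c: "w1 \<in> carrier (free_group V)"
    using a0 b0 c0 ac by (simp add: w1_def fg_carrier fred_Cons step_def cancels_def)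
  have w2c: "w2 \<in> carrier (free_group V)"
    using a0 b0 c0 ac by (simp add: w2_def fg_carrier fred_Cons step_def cancels_def)
  have ev1: "ev K s w1 = sC p q \<otimes>\<^bsub>K\<^esub> (sA p q \<otimes>\<^bsub>K\<^esub> (sB p q \<otimes>\<^bsub>K\<^esub> (sC p q \<otimes>\<^bsub>K\<^esub> (sA p q \<otimes>\<^bsub>K\<^esub> \<one>\<^bsub>K\<^esub>))))"
    using sa sc sb[OF b0(2,3)] by (simp add: w1_def)
  have ev2: "ev K s w2 = sC p q \<otimes>\<^bsub>K\<^esub> (sA p q \<otimes>\<^bsub>K\<^esub> (sB p q \<otimes>\<^bsub>K\<^esub> (sC p q \<otimes>\<^bsub>K\<^esub> (sB p q \<otimes>\<^bsub>K\<^esub>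
     (sC p q \<otimes>\<^bsub>K\<^esub> (sA p q \<otimes>\<^bsub>K\<^esub> (sB p q \<otimes>\<^bsub>K\<^esub> (sC p q \<otimes>\<^bsub>K\<^esub> \<one>\<^bsub>K\<^esub>))))))))"
    using sa sc sb[OF b0(2,3)] by (simp add: w2_def)
  have y1: "[(0, False)] \<in> psi ` H"
    using hit[OF w1c, unfolded ev1] walk1[OF p3 q3, folded K_def] unfolding x0_def by simp
  have y2: "[(1, False)] \<in> psi ` H"
    using hit[OF w2c, unfolded ev2] walk2[OF p3 q3, folded K_def] unfolding x0_def by simp
  have "carrier F2 \<subseteq> psi ` H"
    by (rule fg_generated[OF Tsub]) (use y1 y2 in auto)
  moreover have "psi ` H \<subseteq> carrier F2" using psi_hom by (auto simp: hom_def Pi_def)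
  ultimately have surj: "psi ` H = carrier F2" by blast
  show ?thesis
    unfolding large_def
    by (intro exI[of _ H] conjI subH fin exI[of _ "{0, 1}"] exI[of _ psi] psi_hom surj) auto
qed

end
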